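(* Let $n=1$ and $k \in \{1,2\}$. Then $\mathcal{H}_{p,\beta, \frac{k}{3}, 0 }^{(l)}$ is spectrally similar to $\Delta^{(l-1)}_{p}$ with the functions \[ \phi_{p,\beta,\frac{k}{3},0}(z)=\frac{4 p \left(p - 1\right)}{4 p^{2} - \left( \beta + 2 z\right)^{2}} , \quad \quad \psi_{p,\beta, \frac{k}{3},0 }(z) = - \frac{\beta^{2} + 2 \beta p + \beta z - 2 p z - 2 p - 2 z^{2} + 2}{\beta + 2 p + 2 z}. \] The spectral decimation function $R_{p,\beta,\frac{k}{3},0 }$ and the exceptional set $\mathscr{E}_{p,\beta, \frac{k}{3},0}$ are given by \[ R_{p,\beta,\frac{k}{3},0 }(z) = \frac{\left( - \beta + 2 p - 2 z \right) \left(\beta^{2} + 2 \beta p + \beta z - 2 p z - 2 p - 2 z^{2} + 2\right)}{4 p \left(1-p\right)} , \quad \quad \mathscr{E}_{p,\beta, \frac{k}{3},0} = \left\{ - \frac{\beta}{2} - p, \ - \frac{\beta}{2} + p \right\}. \]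
   Context: Fix $p\in(0,1)$, $\beta\in\mathbb{R}$, $l\ge 1$. For $x\in\mathbb{Z}_+\setminus\{0\}$ let $m(x)$ be the largest $m$ with $3^m\mid x$, and set $p(x,x-1)=1-p$, $p(x,x+1)=p$ if $3^{-m(x)}x\equiv 1 \pmod 3$, and $p(x,x-1)=p$, $p(x,x+1)=1-p$ if $3^{-m(x)}x\equiv 2 \pmod 3$. On $V_l=\{0,1,\dots,3^l\}$ the level-$l$ self-similar almost Mathieu operator $\mathcal{H}^{(l)}_{p,\beta,\alpha,\theta}$ acts by $(\mathcal{H}^{(l)}f)(0)=\beta\cos(\theta)f(0)-f(1)$, $(\mathcal{H}^{(l)}f)(3^l)=\beta\cos(2\pi\alpha 3^l+\theta)f(3^l)-f(3^l-1)$, and for $0<x<3^l$, $(\mathcal{H}^{(l)}f)(x)=\beta\cos(2\pi\alpha x+\theta)f(x)-p(x,x-1)f(x-1)-p(x,x+1)f(x+1)$. The level-$l$ Laplacian $\Delta^{(l)}_p$ on $V_l$ is given by $(\Delta^{(l)}_pf)(0)=f(0)-f(1)$, $(\Delta^{(l)}_pf)(3^l)=f(3^l)-f(3^l-1)$, and $(\Delta^{(l)}_pf)(x)=f(x)-p(x,x-1)f(x-1)-p(x,x+1)f(x+1)$ for $0<x<3^l$. Here $\theta=0$, $\alpha=k/3$. Decompose $\mathcal{H}^{(l)}$ in block form $\begin{pmatrix}T & J^T\\ J & X\end{pmatrix}$ with respect to $\mathrm{span}\{\delta_v: v\equiv 0 \bmod 3\}\oplus\mathrm{span}\{\delta_v: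 v\not\equiv 0\bmod 3\}$. Spectral similarity of $\mathcal{H}^{(l)}$ to $\Delta^{(l-1)}_p$ (identified on the vertices $\equiv 0 \bmod 3$) with functions $\phi,\psi$ means that the Schur complement satisfies $T-z-J^T(X-z)^{-1}J=\phi(z)\Delta^{(l-1)}_p-\psi(z)I$ (equivalently $U^*(\mathcal{H}^{(l)}-z)^{-1}U=(\phi(z)\Delta^{(l-1)}_p-\psi(z))^{-1}$); the spectral decimation function is $R=\psi/\phi$ and the exceptional set is $\{z: z\in\sigma(X)\text{ or }\phi(z)=0\}$. *)

theory Defs
  imports "HOL-Analysis.Analysis"
begin

definition m3 :: "nat \<Rightarrow> nat" where
  "m3 x = (GREATEST m. 3 ^ m dvd x)"

definition trans_p :: "real \<Rightarrow> nat \<Rightarrow> nat \<Rightarrow> real" where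
  "trans_p p x y =
     (if (x div 3 ^ m3 x) mod 3 = 1 then
        (if y + 1 = x then 1 - p else if y = x + 1 then p else 0)
      else
        (if y + 1 = x then p else if y = x + 1 then 1 - p else 0))"

definition V :: "nat \<Rightarrow> nat set" where
  "V l = {0..3 ^ l}"

definition smH :: "nat \<Rightarrow> real \<Rightarrow> real \<Rightarrow> real \<Rightarrow> real \<Rightarrow> nat \<Rightarrow> nat \<Rightarrow> real" where
  "smH l p \<beta> \<alpha> \<theta> x y =
     (if x = 0 then (if y = 0 then \<beta> * cos \<theta> else if y = 1 then -1 else 0)
      else if x = 3 ^ l then
        (if y = x then \<beta> * cos (2 * pi * \<alpha> * 3 ^ l + \<theta>) else if y + 1 = x then -1 else 0)
      else (if y = x then \<beta> * cos (2 * pi * \<alpha> * real x + \<theta>) else - trans_p p x y))"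

definition lap :: "nat \<Rightarrow> real \<Rightarrow> nat \<Rightarrow> nat \<Rightarrow> real" where
  "lap l p x y =
     (if x = 0 then (if y = 0 then 1 else if y = 1 then -1 else 0)
      else if x = 3 ^ l then (if y = x then 1 else if y + 1 = x then -1 else 0)
      else (if y = x then 1 else - trans_p p x y))"

text \<open>Vertices of V_l that are multiples of 3 (block T) and those that are not (block X).\<close>
definition S0 :: "nat \<Rightarrow> nat set" where
  "S0 l = {v \<in> V l. 3 dvd v}"

definition S1 :: "nat \<Rightarrow> nat set" where
  "S1 l = {v \<in> V l. \<not> 3 dvd v}"

definition in_spec_X :: "nat \<Rightarrow> real \<Rightarrow> real \<Rightarrow> real \<Rightarrow> real \<Rightarrow> complex \<Rightarrow> bool" where
  "in_spec_X l p \<beta> \<alpha> \<theta> z \<longleftrightarrow>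
     (\<exists>f :: nat \<Rightarrow> complex. (\<exists>a\<in>S1 l. f a \<noteq> 0) \<and>
        (\<forall>a\<in>S1 l. (\<Sum>b\<in>S1 l. complex_of_real (smH l p \<beta> \<alpha> \<theta> a b) * f b) = z * f a))"

definition resX :: "nat \<Rightarrow> real \<Rightarrow> real \<Rightarrow> real \<Rightarrow> real \<Rightarrow> complex \<Rightarrow> nat \<Rightarrow> nat \<Rightarrow> complex" where
  "resX l p \<beta> \<alpha> \<theta> z = (THE G.
     (\<forall>a\<in>S1 l. \<forall>c\<in>S1 l.
        (\<Sum>b\<in>S1 l. (complex_of_real (smH l p \<beta> \<alpha> \<theta> a b) - (if a = b then z else 0)) * G b c)
          = (if a = c then 1 else 0)) \<and>
     (\<forall>a c. a \<notin> S1 l \<or> c \<notin> S1 l \<longrightarrow> G a c = 0))"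

text \<open>Schur complement T - z - B (X - z)^(-1) J, entries indexed by S0 l, where B and J are
  the off-diagonal blocks of H^(l) (B = the block called J^T in the paper).\<close>
definition schur :: "nat \<Rightarrow> real \<Rightarrow> real \<Rightarrow> real \<Rightarrow> real \<Rightarrow> complex \<Rightarrow> nat \<Rightarrow> nat \<Rightarrow> complex" where
  "schur l p \<beta> \<alpha> \<theta> z u w =
     complex_of_real (smH l p \<beta> \<alpha> \<theta> u w) - (if u = w then z else 0)
     - (\<Sum>a\<in>S1 l. \<Sum>b\<in>S1 l. complex_of_real (smH l p \<beta> \<alpha> \<theta> u a) * resX l p \<beta> \<alpha> \<theta> z a b
                              * complex_of_real (smH l p \<beta> \<alpha> \<theta> b w))"

definition exceptional_set ::
  "nat \<Rightarrow> real \<Rightarrow> real \<Rightarrow> real \<Rightarrow> real \<Rightarrow> (complex \<Rightarrow> complex) \<Rightarrow> complex set" where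
  "exceptional_set l p \<beta> \<alpha> \<theta> \<phi> = {z. in_spec_X l p \<beta> \<alpha> \<theta> z \<or> \<phi> z = 0}"

text \<open>Spectral similarity of H^(l) to Delta_p^(l-1) (vertex v of V_(l-1) identified with 3v of V_l)
  with functions phi, psi: the Schur complement identity holds off the exceptional set.\<close>
definition spectrally_similar ::
  "nat \<Rightarrow> real \<Rightarrow> real \<Rightarrow> real \<Rightarrow> real \<Rightarrow> (complex \<Rightarrow> complex) \<Rightarrow> (complex \<Rightarrow> complex) \<Rightarrow> bool" where
  "spectrally_similar l p \<beta> \<alpha> \<theta> \<phi> \<psi> \<longleftrightarrow>
     (\<forall>z. z \<notin> exceptional_set l p \<beta> \<alpha> \<theta> \<phi> \<longrightarrow>
        (\<forall>u\<in>V (l - 1). \<forall>w\<in>V (l - 1).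
           schur l p \<beta> \<alpha> \<theta> z (3 * u) (3 * w)
             = \<phi> z * complex_of_real (lap (l - 1) p u w) - (if u = w then \<psi> z else 0)))"

end

theory Submission imports Defs begin

lemma m3_eq:
  assumes "0 < x" "3^m dvd x" "\<not> 3^Suc m dvd x" shows "m3 x = m"
  unfolding m3_def
proof (rule Greatest_equality)
  show "3^m dvd x" by fact
next
  fix y assume y: "3^y dvd (x::nat)"
  show "y \<le> m"
  proof (rule ccontr)
    assume "\<not> y \<le> m"
    then have "(3::nat)^Suc m dvd 3^y" by (intro le_imp_power_dvd) simp
    with y assms(3) show False using dvd_trans by blast
  qed
qed

lemma m3_props:
  assumes "0 < x" shows "3^(m3 x) dvd x" "\<not> 3^Suc (m3 x) dvd x"
proof -
  have b: "y \<le> x" if "3^y dvd x" for y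
  proof -
    have "3^y \<le> x" using dvd_imp_le[OF that assms] .
    moreover have "y < 3^y" by (induct y) auto
    ultimately show ?thesis by simp
  qed
  show "3^(m3 x) dvd x" unfolding m3_def by (rule GreatestI_nat[of _ 0 x]) (auto intro: b)
  show "\<not> 3^Suc (m3 x) dvd x"
  proof
    assume "3^Suc (m3 x) dvd x"
    then have "Suc (m3 x) \<le> m3 x" unfolding m3_def[of x] by (rule Greatest_le_nat[of _ _ x]) (auto intro: b)
    then show False by simp
  qed
qed

lemma m3_not3: "\<not> 3 dvd x \<Longrightarrow> m3 x = 0"
  by (rule m3_eq) (auto intro: Nat.gr0I)

lemma m3_times3: assumes "0 < i" shows "m3 (3*i) = Suc (m3 i)"
proof (rule m3_eq)
  show "3 ^ Suc (m3 i) dvd 3 * i" using m3_props(1)[OF assms] by simp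
  show "\<not> 3 ^ Suc (Suc (m3 i)) dvd 3 * i" using m3_props(2)[OF assms] by simp
qed (use assms in simp)

lemma trans_p_1: "x mod 3 = 1 \<Longrightarrow> trans_p p x y = (if y + 1 = x then 1 - p else if y = x + 1 then p else 0)"
  unfolding trans_p_def by (subst m3_not3) auto

lemma trans_p_2: "x mod 3 = 2 \<Longrightarrow> trans_p p x y = (if y + 1 = x then p else if y = x + 1 then 1 - p else 0)"
  unfolding trans_p_def by (subst m3_not3) auto

lemma trans_p_3: assumes "0 < i"
  shows "trans_p p (3*i) (3*i+1) = trans_p p i (i+1)" "trans_p p (3*i) (3*i-1) = trans_p p i (i-1)"
proof -
  have "3*i div 3 ^ m3 (3*i) = i div 3 ^ m3 i" using assms
    by (simp add: m3_times3 div_mult_mult1)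
  then show "trans_p p (3*i) (3*i+1) = trans_p p i (i+1)" "trans_p p (3*i) (3*i-1) = trans_p p i (i-1)"
    unfolding trans_p_def using assms by auto
qed

lemma trans_p_sum: "0 < i \<Longrightarrow> trans_p p i (i+1) + trans_p p i (i-1) = 1"
  unfolding trans_p_def by auto

lemma trans_p_zero: "y \<noteq> x + 1 \<Longrightarrow> y + 1 \<noteq> x \<Longrightarrow> trans_p p x y = 0"
  unfolding trans_p_def by auto

lemma cos_k3: assumes "k \<in> {1,2}" shows "cos (2*pi*(real k/3)*real x) = (if 3 dvd x then 1 else -1/2)"
proof -
  define q r where "q = k*x div 3" and "r = k*x mod 3"
  have kx: "k*x = 3*q + r" "r < 3" unfolding q_def r_def by auto
  have "2*pi*(real k/3)*real x = 2*pi*real (k*x)/3" by simp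
  also have "\<dots> = 2 * real q * pi + 2*pi*real r/3" unfolding kx by (simp add: field_simps)
  finally have e0: "2*pi*(real k/3)*real x = 2 * real q * pi + 2*pi*real r/3" .
  have per: "cos (2 * real q * pi + t) = cos t" for t by (simp add: cos_add)
  have e: "cos (2*pi*(real k/3)*real x) = cos (2*pi*real r/3)"
    unfolding e0 per ..
  have r0: "r = 0 \<longleftrightarrow> 3 dvd x" using assms unfolding r_def by auto presburger+
  consider "r = 0" | "r = 1" | "r = 2" using kx by linarith
  then show ?thesis
  proof cases
    case 1 then show ?thesis using e r0 by simp
  next
    case 2 then show ?thesis using e r0 cos_120 by simp
  next
    case 3
    have "cos (2*pi*real r/3) = cos (pi + pi/3)" using 3 by (simp add: field_simps)
    also have "\<dots> = -1/2" unfolding cos_periodic_pi2 cos_60 by simp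
    finally show ?thesis using e r0 3 by simp
  qed
qed


definition prt :: "nat \<Rightarrow> nat" where "prt a = (if a mod 3 = 1 then a + 1 else a - 1)"
definition dd :: "real \<Rightarrow> complex \<Rightarrow> complex" where "dd b z = - of_real b / 2 - z"
definition DD :: "real \<Rightarrow> real \<Rightarrow> complex \<Rightarrow> complex" where "DD b p z = (dd b z)\<^sup>2 - (of_real p)\<^sup>2"

definition Gf :: "nat \<Rightarrow> real \<Rightarrow> real \<Rightarrow> complex \<Rightarrow> nat \<Rightarrow> nat \<Rightarrow> complex" where
  "Gf l p b z a c = (if a \<in> S1 l \<and> c \<in> S1 l then (dd b z * (if a = c then 1 else 0) + of_real p * (if prt a = c then 1 else 0)) / DD b p z else 0)"

lemma finite_S1: "finite (S1 l)" unfolding S1_def V_def by auto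

context
  fixes p \<beta> :: real and l k :: nat
  assumes p0: "0 < p" and p1: "p < 1" and l1: "1 \<le> l" and kk: "k \<in> {1,2}"
begin

abbreviation "HH \<equiv> smH l p \<beta> (real k / 3) 0"

lemma N3: "(3::nat)^l = 3 * 3^(l-1)"
  using l1 by (metis Suc_diff_le diff_Suc_1 power_Suc)

lemma diagH: "HH x x = (if 3 dvd x then \<beta> else -\<beta>/2)"
proof -
  have "3 dvd ((3::nat)^l)" using N3 by simp
  then show ?thesis using cos_k3[OF kk, of x] cos_k3[OF kk, of "3^l"] by (auto simp: smH_def)
qed

lemma S1_iff: "a \<in> S1 l \<longleftrightarrow> a \<le> 3^l \<and> \<not> 3 dvd a"
  unfolding S1_def V_def by auto

lemma S1_facts: assumes "a \<in> S1 l" shows "0 < a" "a < 3^l" "a \<noteq> 3^l" "a \<noteq> 0"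
proof -
  have d: "3 dvd ((3::nat)^l)" using N3 by simp
  have a: "a \<le> 3^l" "\<not> 3 dvd a" using assms unfolding S1_iff by auto
  show "a \<noteq> 3^l" using a d by auto
  show "a \<noteq> 0" using a(2) by (metis dvd_0_right)
  show "0 < a" using \<open>a \<noteq> 0\<close> by simp
  show "a < 3^l" using a d \<open>a \<noteq> 3^l\<close> by simp
qed

lemma prt_S1: assumes "a \<in> S1 l" shows "prt a \<in> S1 l" "prt (prt a) = a" "prt a \<noteq> a"
proof -
  have d: "3 dvd ((3::nat)^l)" using N3 by simp
  have a: "a < 3^l" "\<not> 3 dvd a" "0 < a" using assms S1_facts[OF assms] unfolding S1_iff by auto
  have h1: "prt a = a+1 \<and> a+1 \<le> 3^l \<and> \<not> 3 dvd (a+1) \<and> prt (a+1) = a" if "a mod 3 = 1"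
  proof -
    have p: "prt a = a + 1" using that unfolding prt_def by simp
    have m: "(a + 1) mod 3 = 2" using that by presburger
    have "a + 1 \<noteq> 3^l"
    proof
      assume "a + 1 = 3^l"
      then have "3 dvd (a+1)" using d by simp
      then show False using m by presburger
    qed
    then have "a + 1 \<le> 3^l" using a by simp
    moreover have "\<not> 3 dvd (a+1)" using m by presburger
    ultimately show ?thesis using p m by (simp add: prt_def)
  qed
  have h2: "prt a = a-1 \<and> a-1 \<le> 3^l \<and> \<not> 3 dvd (a-1) \<and> prt (a-1) = a" if "\<not> a mod 3 = 1"
  proof -
    have "a mod 3 = 2" using that a(2) by presburger
    then have p: "prt a = a - 1" unfolding prt_def by simp
    have "a - 1 = 3*(a div 3) + 1" using \<open>a mod 3 = 2\<close> div_mult_mod_eq[of a 3] by linarith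
    then have m: "(a - 1) mod 3 = 1" by simp
    have "\<not> 3 dvd (a-1)" using m by (simp add: dvd_eq_mod_eq_0)
    then show ?thesis using p m a by (simp add: prt_def)
  qed
  show "prt a \<in> S1 l" "prt (prt a) = a" "prt a \<noteq> a"
  proof -
    have "prt a \<in> S1 l \<and> prt (prt a) = a \<and> prt a \<noteq> a"
    proof (cases "a mod 3 = 1")
      case True
      then have x: "prt a = a+1" "a+1 \<le> 3^l" "\<not> 3 dvd (a+1)" "prt (a+1) = a" using h1 by blast+
      show ?thesis unfolding x(1) S1_iff using x(2-4) by simp
    next
      case False
      then have x: "prt a = a-1" "a-1 \<le> 3^l" "\<not> 3 dvd (a-1)" "prt (a-1) = a" using h2 by blast+
      show ?thesis unfolding x(1) S1_iff using x(2-4) a(3) by simp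
    qed
    then show "prt a \<in> S1 l" "prt (prt a) = a" "prt a \<noteq> a" by blast+
  qed
qed

lemma H_S1_any: assumes "a \<in> S1 l" shows "HH a w = (if w = a then -\<beta>/2 else - trans_p p a w)"
  using S1_facts[OF assms] diagH[of a] assms unfolding S1_iff by (auto simp: smH_def)

lemma HS1: assumes "a \<in> S1 l" "b \<in> S1 l"
  shows "HH a b = (if b = a then -\<beta>/2 else if b = prt a then -p else 0)"
proof -
  have na: "\<not> 3 dvd a" "\<not> 3 dvd b" using assms unfolding S1_iff by auto
  show ?thesis
  proof (cases "a mod 3 = 1")
    case True
    have p: "prt a = a + 1" using True unfolding prt_def by simp
    have "b + 1 \<noteq> a" using True na by presburger
    then show ?thesis unfolding H_S1_any[OF assms(1)] trans_p_1[OF True] p by auto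
  next
    case False
    then have F: "a mod 3 = 2" using na by presburger
    have p: "prt a = a - 1" using F unfolding prt_def by simp
    have "b \<noteq> a + 1" using F na by presburger
    moreover have "b + 1 = a \<longleftrightarrow> b = a - 1" using S1_facts[OF assms(1)] by linarith
    ultimately show ?thesis unfolding H_S1_any[OF assms(1)] trans_p_2[OF F] p by auto
  qed
qed

lemma rowH: assumes "a \<in> S1 l"
  shows "(\<Sum>b\<in>S1 l. complex_of_real (HH a b) * g b) = - of_real \<beta> / 2 * g a - of_real p * g (prt a)"
proof -
  have "(\<Sum>b\<in>S1 l. complex_of_real (HH a b) * g b)
      = (\<Sum>b\<in>S1 l. (if b = a then - of_real \<beta> / 2 * g a else 0) + (if b = prt a then - of_real p * g (prt a) else 0))"
    by (rule sum.cong) (use prt_S1[OF assms] in \<open>auto simp: HS1[OF assms]\<close>)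
  also have "\<dots> = - of_real \<beta> / 2 * g a - of_real p * g (prt a)"
    by (simp add: sum.distrib finite_S1 assms prt_S1[OF assms])
  finally show ?thesis .
qed

lemma rowX: assumes "a \<in> S1 l"
  shows "(\<Sum>b\<in>S1 l. (complex_of_real (HH a b) - (if a = b then z else 0)) * g b) = dd \<beta> z * g a - of_real p * g (prt a)"
proof -
  have "(\<Sum>b\<in>S1 l. (complex_of_real (HH a b) - (if a = b then z else 0)) * g b)
     = (\<Sum>b\<in>S1 l. complex_of_real (HH a b) * g b - (if a = b then z * g b else 0))"
    by (rule sum.cong) (auto simp: algebra_simps)
  also have "\<dots> = (\<Sum>b\<in>S1 l. complex_of_real (HH a b) * g b) - (\<Sum>b\<in>S1 l. (if a = b then z * g b else 0))"
    by (rule sum_subtractf)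
  also have "\<dots> = dd \<beta> z * g a - of_real p * g (prt a)"
    using assms by (simp add: rowH[OF assms] finite_S1) (simp add: dd_def algebra_simps)
  finally show ?thesis .
qed

lemma resX_eq: assumes "DD \<beta> p z \<noteq> 0" shows "resX l p \<beta> (real k/3) 0 z = Gf l p \<beta> z"
  unfolding resX_def
proof (rule the_equality)
  show "(\<forall>a\<in>S1 l. \<forall>c\<in>S1 l. (\<Sum>b\<in>S1 l. (complex_of_real (HH a b) - (if a = b then z else 0)) * Gf l p \<beta> z b c) = (if a = c then 1 else 0))
     \<and> (\<forall>a c. a \<notin> S1 l \<or> c \<notin> S1 l \<longrightarrow> Gf l p \<beta> z a c = 0)"
  proof (intro conjI ballI allI impI)
    fix a c assume a: "a \<in> S1 l" and c: "c \<in> S1 l"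
    show "(\<Sum>b\<in>S1 l. (complex_of_real (HH a b) - (if a = b then z else 0)) * Gf l p \<beta> z b c) = (if a = c then 1 else 0)"
    proof -
      have D: "DD \<beta> p z = dd \<beta> z * dd \<beta> z - of_real p * of_real p"
        by (simp add: DD_def power2_eq_square)
      consider "a = c" | "prt a = c" | "a \<noteq> c" "prt a \<noteq> c" by blast
      then show ?thesis
      proof cases
        case 1
        then have "dd \<beta> z * Gf l p \<beta> z a c - of_real p * Gf l p \<beta> z (prt a) c
           = (dd \<beta> z * dd \<beta> z - of_real p * of_real p) / DD \<beta> p z"
          using a c prt_S1[OF a] by (simp add: Gf_def diff_divide_distrib)
        then show ?thesis unfolding rowX[OF a] using 1 assms D by simp
      next
        case 2
        then have "dd \<beta> z * Gf l p \<beta> z a c - of_real p * Gf l p \<beta> z (prt a) c = 0"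
          using a c prt_S1[OF a] by (auto simp: Gf_def)
        then show ?thesis unfolding rowX[OF a] using 2 prt_S1[OF a] by auto
      next
        case 3
        then have "dd \<beta> z * Gf l p \<beta> z a c - of_real p * Gf l p \<beta> z (prt a) c = 0"
          using a c prt_S1[OF a] by (auto simp: Gf_def)
        then show ?thesis unfolding rowX[OF a] using 3 by auto
      qed
    qed
  next
    fix a c assume "a \<notin> S1 l \<or> c \<notin> S1 l"
    then show "Gf l p \<beta> z a c = 0" unfolding Gf_def by auto
  qed
next
  fix G assume H: "(\<forall>a\<in>S1 l. \<forall>c\<in>S1 l. (\<Sum>b\<in>S1 l. (complex_of_real (HH a b) - (if a = b then z else 0)) * G b c) = (if a = c then 1 else 0))
     \<and> (\<forall>a c. a \<notin> S1 l \<or> c \<notin> S1 l \<longrightarrow> G a c = 0)"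
  show "G = Gf l p \<beta> z"
  proof (intro ext)
    fix a c
    show "G a c = Gf l p \<beta> z a c"
    proof (cases "a \<in> S1 l \<and> c \<in> S1 l")
      case True
      then have a: "a \<in> S1 l" and c: "c \<in> S1 l" by auto
      have e1: "dd \<beta> z * G a c - of_real p * G (prt a) c = (if a = c then 1 else 0)"
        using H a c rowX[OF a, of z "\<lambda>b. G b c"] by auto
      have e2: "dd \<beta> z * G (prt a) c - of_real p * G a c = (if prt a = c then 1 else 0)"
        using H a c prt_S1[OF a] rowX[OF prt_S1(1)[OF a], of z "\<lambda>b. G b c"] by auto
      have "DD \<beta> p z * G a c = dd \<beta> z * (dd \<beta> z * G a c - of_real p * G (prt a) c) + of_real p * (dd \<beta> z * G (prt a) c - of_real p * G a c)"
        by (simp add: DD_def algebra_simps power2_eq_square)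
      also have "\<dots> = dd \<beta> z * (if a = c then 1 else 0) + of_real p * (if prt a = c then 1 else 0)"
        unfolding e1 e2 ..
      finally show ?thesis using a c assms unfolding Gf_def by (simp add: eq_divide_eq mult.commute)
    next
      case False
      then show ?thesis using H unfolding Gf_def by auto
    qed
  qed
qed

lemma spec_DD: assumes "in_spec_X l p \<beta> (real k/3) 0 z" shows "DD \<beta> p z = 0"
proof -
  obtain f a where a: "a \<in> S1 l" and fa: "f a \<noteq> 0"
    and eig: "\<forall>a\<in>S1 l. (\<Sum>b\<in>S1 l. complex_of_real (HH a b) * f b) = z * f a"
    using assms unfolding in_spec_X_def by blast
  have e1: "- of_real \<beta> / 2 * f a - of_real p * f (prt a) = z * f a"
    using eig a rowH[OF a, of f] by auto
  have e2: "- of_real \<beta> / 2 * f (prt a) - of_real p * f (prt (prt a)) = z * f (prt a)"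
    using eig prt_S1[OF a] rowH[OF prt_S1(1)[OF a], of f] by auto
  have x1: "dd \<beta> z * f a - of_real p * f (prt a) = 0"
  proof -
    have "dd \<beta> z * f a - of_real p * f (prt a) = (- of_real \<beta> / 2 * f a - of_real p * f (prt a)) - z * f a"
      by (simp add: dd_def algebra_simps)
    also have "\<dots> = 0" unfolding e1 by simp
    finally show ?thesis .
  qed
  have x2: "dd \<beta> z * f (prt a) - of_real p * f a = 0"
  proof -
    have "dd \<beta> z * f (prt a) - of_real p * f a = (- of_real \<beta> / 2 * f (prt a) - of_real p * f (prt (prt a))) - z * f (prt a)"
      using prt_S1[OF a] by (simp add: dd_def algebra_simps)
    also have "\<dots> = 0" unfolding e2 by simp
    finally show ?thesis .
  qed
  have "DD \<beta> p z * f a = dd \<beta> z * (dd \<beta> z * f a - of_real p * f (prt a)) + of_real p * (dd \<beta> z * f (prt a) - of_real p * f a)"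
    by (simp add: DD_def algebra_simps power2_eq_square)
  also have "\<dots> = 0" unfolding x1 x2 by simp
  finally show ?thesis using fa by simp
qed

end



lemma mod3h: "\<not> 3 dvd (3*c+1::nat)" "\<not> 3 dvd (3*c+2::nat)" "(3*c+1::nat) mod 3 = 1" "(3*c+2::nat) mod 3 = 2"
  "0 < c \<Longrightarrow> 3*c - 1 = 3*(c-1)+(2::nat)" "0 < c \<Longrightarrow> 3*c - 2 = 3*(c-1)+(1::nat)"
  by presburger+

lemma neg_helper: "- (complex_of_real (-r) * (of_real p * of_real (-(1-p)) / D)) = - of_real r * (of_real p * (1 - of_real p) / (D::complex))"
proof -
  have "complex_of_real (-(1-p)) = - (1 - of_real p)" by simp
  then show ?thesis by (simp only: of_real_minus mult_minus_left mult_minus_right minus_minus minus_divide_left[symmetric])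
qed

context
  fixes p \<beta> :: real and l k :: nat
  assumes p0: "0 < p" and p1: "p < 1" and l1: "1 \<le> l" and kk: "k \<in> {1,2}"
begin

abbreviation "HC \<equiv> smH l p \<beta> (real k / 3) 0"
abbreviation "M \<equiv> (3::nat)^(l-1)"

lemmas S1_iff' = S1_iff[OF p0 p1 l1 kk]
lemmas prt_S1' = prt_S1[OF p0 p1 l1 kk]
lemmas S1_facts' = S1_facts[OF p0 p1 l1 kk]
lemmas H_S1_any' = H_S1_any[OF p0 p1 l1 kk]
lemmas diagH' = diagH[OF p0 p1 l1 kk]

lemma NM: "(3::nat)^l = 3 * M" using N3[OF p0 p1 l1 kk] .
lemma M1: "1 \<le> M" by simp

lemma rowS0: assumes "u \<le> 3^l" "3 dvd u"
  shows "(\<Sum>a\<in>S1 l. complex_of_real (HC u a) * g a)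
     = (if u < 3^l then of_real (HC u (u+1)) * g (u+1) else 0) + (if 0 < u then of_real (HC u (u-1)) * g (u-1) else 0)"
proof -
  have pw: "complex_of_real (HC u a) * g a
     = (if a = u+1 then of_real (HC u (u+1)) * g (u+1) else 0) + (if 0 < u \<and> a = u - 1 then of_real (HC u (u-1)) * g (u-1) else 0)"
    if a: "a \<in> S1 l" for a
  proof -
    have "a \<noteq> u" "\<not> 3 dvd a" using a assms unfolding S1_iff' by auto
    then show ?thesis using assms
      by (cases "a = u+1"; cases "a + 1 = u") (auto simp: smH_def trans_p_zero)
  qed
  obtain c where c: "u = 3*c" using assms(2) by blast
  have m1: "u + 1 \<in> S1 l \<longleftrightarrow> u < 3^l" using assms unfolding S1_iff' c using mod3h(1)[of c] by auto
  have m2: "0 < u \<Longrightarrow> u - 1 \<in> S1 l" using assms unfolding S1_iff' c using mod3h(2,5)[of "c-1"] mod3h(5)[of c]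
    by auto
  have "(\<Sum>a\<in>S1 l. complex_of_real (HC u a) * g a)
     = (\<Sum>a\<in>S1 l. (if a = u+1 then of_real (HC u (u+1)) * g (u+1) else 0) + (if 0 < u \<and> a = u - 1 then of_real (HC u (u-1)) * g (u-1) else 0))"
    by (rule sum.cong) (auto simp: pw)
  also have "\<dots> = (if u < 3^l then of_real (HC u (u+1)) * g (u+1) else 0) + (if 0 < u then of_real (HC u (u-1)) * g (u-1) else 0)"
  proof (cases "0 < u")
    case True then show ?thesis using m1 m2 by (simp add: sum.distrib finite_S1)
  next
    case False then show ?thesis using m1 by (simp add: sum.distrib finite_S1)
  qed
  finally show ?thesis .
qed

lemma colG: assumes a: "a \<in> S1 l"
  shows "(\<Sum>b\<in>S1 l. Gf l p \<beta> z a b * h b) = (dd \<beta> z * h a + of_real p * h (prt a)) / DD \<beta> p z"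
proof -
  have "(\<Sum>b\<in>S1 l. Gf l p \<beta> z a b * h b)
      = (\<Sum>b\<in>S1 l. (if b = a then dd \<beta> z * h a / DD \<beta> p z else 0) + (if b = prt a then of_real p * h (prt a) / DD \<beta> p z else 0))"
    by (rule sum.cong) (use a prt_S1'[OF a] in \<open>auto simp: Gf_def add_divide_distrib\<close>)
  also have "\<dots> = (dd \<beta> z * h a + of_real p * h (prt a)) / DD \<beta> p z"
    using a prt_S1'[OF a] by (simp add: sum.distrib finite_S1 add_divide_distrib)
  finally show ?thesis .
qed

lemma schur_formula: assumes D: "DD \<beta> p z \<noteq> 0" and i: "i \<le> M" and j: "j \<le> M"
  shows "schur l p \<beta> (real k/3) 0 z (3*i) (3*j)
    = of_real (HC (3*i) (3*j)) - (if i = j then z else 0)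
      - ((if i < M then of_real (HC (3*i) (3*i+1)) * ((dd \<beta> z * of_real (HC (3*i+1) (3*j)) + of_real p * of_real (HC (3*i+2) (3*j))) / DD \<beta> p z) else 0)
       + (if 0 < i then of_real (HC (3*i) (3*i-1)) * ((dd \<beta> z * of_real (HC (3*i-1) (3*j)) + of_real p * of_real (HC (3*i-2) (3*j))) / DD \<beta> p z) else 0))"
proof -
  let ?g = "\<lambda>a. (dd \<beta> z * of_real (HC a (3*j)) + of_real p * of_real (HC (prt a) (3*j))) / DD \<beta> p z"
  have inner: "(\<Sum>b\<in>S1 l. complex_of_real (HC (3*i) a) * resX l p \<beta> (real k/3) 0 z a b * complex_of_real (HC b (3*j)))
      = complex_of_real (HC (3*i) a) * ?g a" if a: "a \<in> S1 l" for a
  proof -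
    have "(\<Sum>b\<in>S1 l. complex_of_real (HC (3*i) a) * Gf l p \<beta> z a b * complex_of_real (HC b (3*j)))
       = complex_of_real (HC (3*i) a) * (\<Sum>b\<in>S1 l. Gf l p \<beta> z a b * complex_of_real (HC b (3*j)))"
      by (simp add: sum_distrib_left mult.assoc)
    then show ?thesis unfolding resX_eq[OF p0 p1 l1 kk D] colG[OF a] by simp
  qed
  have "(\<Sum>a\<in>S1 l. \<Sum>b\<in>S1 l. complex_of_real (HC (3*i) a) * resX l p \<beta> (real k/3) 0 z a b * complex_of_real (HC b (3*j)))
     = (\<Sum>a\<in>S1 l. complex_of_real (HC (3*i) a) * ?g a)"
    by (rule sum.cong) (simp_all add: inner)
  also have "\<dots> = (if 3*i < 3^l then of_real (HC (3*i) (3*i+1)) * ?g (3*i+1) else 0) + (if 0 < 3*i then of_real (HC (3*i) (3*i-1)) * ?g (3*i-1) else 0)"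
    by (rule rowS0) (use i NM in auto)
  finally have X: "(\<Sum>a\<in>S1 l. \<Sum>b\<in>S1 l. complex_of_real (HC (3*i) a) * resX l p \<beta> (real k/3) 0 z a b * complex_of_real (HC b (3*j)))
     = (if 3*i < 3^l then of_real (HC (3*i) (3*i+1)) * ?g (3*i+1) else 0) + (if 0 < 3*i then of_real (HC (3*i) (3*i-1)) * ?g (3*i-1) else 0)" .
  have q1: "prt (3*i+1) = 3*i+2" unfolding prt_def by (simp add: mod3h)
  have q2: "0 < i \<Longrightarrow> prt (3*i-1) = 3*i-2" unfolding prt_def using mod3h(5,6)[of i] mod3h(4)[of "i-1"] by simp
  have c1: "(3*i < 3^l) = (i < M)" using NM by simp
  show ?thesis
  proof (cases "0 < i")
    case True then show ?thesis unfolding schur_def X c1 using q1 q2 True by simp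
  next
    case False then show ?thesis unfolding schur_def X c1 using q1 by simp
  qed
qed

lemma v1: assumes "i < M" shows "HC (3*i+1) (3*j) = (if j = i then -(1-p) else 0)"
proof -
  have a: "3*i+1 \<in> S1 l" unfolding S1_iff' NM using assms mod3h(1)[of i] by simp
  have "3*j \<noteq> 3*i+1" "3*j \<noteq> 3*i+2" by presburger+
  then show ?thesis unfolding H_S1_any'[OF a] trans_p_1[OF mod3h(3)] by auto
qed

lemma v2: assumes "i < M" shows "HC (3*i+2) (3*j) = (if j = i+1 then -(1-p) else 0)"
proof -
  have a: "3*i+2 \<in> S1 l" unfolding S1_iff' NM using assms mod3h(2)[of i] by simp
  have "3*j \<noteq> 3*i+2" "3*j+1 \<noteq> 3*i+2" by presburger+
  then show ?thesis unfolding H_S1_any'[OF a] trans_p_2[OF mod3h(4)] by auto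
qed

lemma v3: assumes "0 < i" "i \<le> M" shows "HC (3*i-1) (3*j) = (if j = i then -(1-p) else 0)"
  using v2[of "i-1" j] assms mod3h(5)[of i] by simp

lemma v4: assumes "0 < i" "i \<le> M" shows "HC (3*i-2) (3*j) = (if j+1 = i then -(1-p) else 0)"
proof -
  have "(j = i - 1) = (j + 1 = i)" using assms by linarith
  then show ?thesis using v1[of "i-1" j] assms mod3h(6)[of i] by simp
qed

lemma v5: assumes "i < M" shows "HC (3*i) (3*i+1) = -(if i = 0 then 1 else trans_p p i (i+1))"
  using assms trans_p_3(1)[of i p] unfolding smH_def NM by auto

lemma v6: assumes "0 < i" "i \<le> M" shows "HC (3*i) (3*i-1) = -(if i = M then 1 else trans_p p i (i-1))"
proof -
  have f: "3*i - 1 \<noteq> 3*i" "3*i - 1 + 1 = 3*i" "3*i \<noteq> 0" using assms by auto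
  show ?thesis
  proof (cases "i = M")
    case True
    then have "3*i = 3^l" using NM by simp
    then show ?thesis using f True unfolding smH_def by simp
  next
    case False
    then have "3*i \<noteq> 3^l" using NM by simp
    then show ?thesis using f False trans_p_3(2)[of i p] assms unfolding smH_def by simp
  qed
qed

lemma v7: assumes "i \<le> M" "j \<le> M" shows "HC (3*i) (3*j) = (if j = i then \<beta> else 0)"
proof (cases "j = i")
  case True then show ?thesis using diagH'[where x="3*i"] by simp
next
  case False
  have "3*j \<noteq> 3*i+1" "3*j+1 \<noteq> 3*i" "3*j \<noteq> 1" by presburger+
  then show ?thesis using False trans_p_zero[of "3*j" "3*i" p] unfolding smH_def NM by auto
qed

lemma DD_fact: fixes z :: complex shows "4 * p\<^sup>2 - (\<beta> + 2 * z)\<^sup>2 = -4 * DD \<beta> p z"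
  by (simp add: DD_def dd_def power2_eq_square field_simps)

lemma DD_fact2: fixes z :: complex shows "DD \<beta> p z = (dd \<beta> z - of_real p) * (dd \<beta> z + of_real p)"
  by (simp add: DD_def power2_eq_square algebra_simps)

lemma K2: fixes z :: complex assumes "DD \<beta> p z \<noteq> 0"
  shows "4 * p * (p - 1) / (4 * p\<^sup>2 - (\<beta> + 2 * z)\<^sup>2) = of_real p * (1 - of_real p) / DD \<beta> p z"
  unfolding DD_fact using assms by (simp add: field_simps)

lemma K1_alg: fixes x P :: complex assumes "x - P \<noteq> 0" "x + P \<noteq> 0"
  shows "P * (1 - P) / ((x - P) * (x + P)) + 2 * (1 - P) / (-2 * (x - P)) = - ((1 - P) * x / ((x - P) * (x + P)))"
proof -
  have a: "(1-P)*(x+P)/((x-P)*(x+P)) = (1-P)/(x-P)" using assms by simp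
  have nz: "2 * P - 2 * x \<noteq> 0" using assms by simp
  have b: "2 * (1 - P) / (-2 * (x - P)) = - ((1-P)/(x-P))" using assms nz by (simp add: field_simps)
  have "P * (1 - P) / ((x - P) * (x + P)) + 2 * (1 - P) / (-2 * (x - P))
      = P * (1 - P) / ((x - P) * (x + P)) - (1 - P) * (x + P) / ((x - P) * (x + P))"
    unfolding a b by simp
  also have "\<dots> = (P * (1 - P) - (1 - P) * (x + P)) / ((x - P) * (x + P))"
    by (simp add: diff_divide_distrib)
  also have "P * (1 - P) - (1 - P) * (x + P) = - ((1 - P) * x)" by (simp add: algebra_simps)
  finally show ?thesis by simp
qed

lemma K1: fixes z :: complex assumes D: "DD \<beta> p z \<noteq> 0"
  shows "4 * p * (p - 1) / (4 * p\<^sup>2 - (\<beta> + 2 * z)\<^sup>2)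
     - (- (\<beta>\<^sup>2 + 2 * \<beta> * p + \<beta> * z - 2 * p * z - 2 * p - 2 * z\<^sup>2 + 2) / (\<beta> + 2 * p + 2 * z))
     = of_real \<beta> - z - (1 - of_real p) * dd \<beta> z / DD \<beta> p z"
proof -
  have n1: "dd \<beta> z - of_real p \<noteq> 0" "dd \<beta> z + of_real p \<noteq> 0" using D DD_fact2 by auto
  have e1: "(\<beta> + 2 * p + 2 * z) = -2 * (dd \<beta> z - of_real p)"
    by (simp add: dd_def field_simps)
  have n2: "(\<beta> + 2 * p + 2 * z) \<noteq> 0" unfolding e1 using n1 by simp
  have N: "(\<beta>\<^sup>2 + 2 * \<beta> * p + \<beta> * z - 2 * p * z - 2 * p - 2 * z\<^sup>2 + 2) = (\<beta> - z) * (\<beta> + 2 * p + 2 * z) + 2 * (1 - p)"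
    by (simp add: algebra_simps power2_eq_square)
  have ND: "(\<beta>\<^sup>2 + 2 * \<beta> * p + \<beta> * z - 2 * p * z - 2 * p - 2 * z\<^sup>2 + 2) / (\<beta> + 2 * p + 2 * z) = (\<beta> - z) + 2 * (1 - p) / (\<beta> + 2 * p + 2 * z)"
    unfolding N using n2 by (simp add: add_divide_distrib)
  have "4 * p * (p - 1) / (4 * p\<^sup>2 - (\<beta> + 2 * z)\<^sup>2)
     - (- (\<beta>\<^sup>2 + 2 * \<beta> * p + \<beta> * z - 2 * p * z - 2 * p - 2 * z\<^sup>2 + 2) / (\<beta> + 2 * p + 2 * z))
     = of_real p * (1 - of_real p) / DD \<beta> p z + ((\<beta> - z) + 2 * (1 - p) / (\<beta> + 2 * p + 2 * z))"
    unfolding K2[OF D] ND[symmetric] by (simp add: minus_divide_left)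
  also have "\<dots> = (\<beta> - z) + (of_real p * (1 - of_real p) / ((dd \<beta> z - of_real p) * (dd \<beta> z + of_real p)) + 2 * (1 - of_real p) / (-2 * (dd \<beta> z - of_real p)))"
    unfolding DD_fact2 e1 by simp
  also have "\<dots> = of_real \<beta> - z - (1 - of_real p) * dd \<beta> z / DD \<beta> p z"
    unfolding K1_alg[OF n1] DD_fact2 by simp
  finally show ?thesis .
qed

lemma entry: fixes z :: complex assumes D: "DD \<beta> p z \<noteq> 0" and i: "i \<le> M" and j: "j \<le> M"
  shows "schur l p \<beta> (real k/3) 0 z (3*i) (3*j)
    = (4 * p * (p - 1) / (4 * p\<^sup>2 - (\<beta> + 2 * z)\<^sup>2)) * complex_of_real (lap (l-1) p i j)
      - (if i = j then (- (\<beta>\<^sup>2 + 2 * \<beta> * p + \<beta> * z - 2 * p * z - 2 * p - 2 * z\<^sup>2 + 2) / (\<beta> + 2 * p + 2 * z)) else 0)"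
proof -
  define r where "r = (if i = 0 then 1 else trans_p p i (i+1))"
  define q where "q = (if i = M then 1 else trans_p p i (i-1))"
  have T1: "(if i < M then of_real (HC (3*i) (3*i+1)) * ((dd \<beta> z * of_real (HC (3*i+1) (3*j)) + of_real p * of_real (HC (3*i+2) (3*j))) / DD \<beta> p z) else 0)
     = (if i < M then of_real (-r) * ((dd \<beta> z * of_real (if j = i then -(1-p) else 0) + of_real p * of_real (if j = i+1 then -(1-p) else 0)) / DD \<beta> p z) else 0)"
  proof (cases "i < M")
    case True
    show ?thesis unfolding v1[OF True] v2[OF True] v5[OF True] r_def by simp
  qed simp
  have T2: "(if 0 < i then of_real (HC (3*i) (3*i-1)) * ((dd \<beta> z * of_real (HC (3*i-1) (3*j)) + of_real p * of_real (HC (3*i-2) (3*j))) / DD \<beta> p z) else 0)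
     = (if 0 < i then of_real (-q) * ((dd \<beta> z * of_real (if j = i then -(1-p) else 0) + of_real p * of_real (if j+1 = i then -(1-p) else 0)) / DD \<beta> p z) else 0)"
  proof (cases "0 < i")
    case True
    show ?thesis unfolding v3[OF True i] v4[OF True i] v6[OF True i] q_def by simp
  qed simp
  have A: "schur l p \<beta> (real k/3) 0 z (3*i) (3*j)
    = of_real (if j = i then \<beta> else 0) - (if i = j then z else 0)
      - ((if i < M then of_real (-r) * ((dd \<beta> z * of_real (if j = i then -(1-p) else 0) + of_real p * of_real (if j = i+1 then -(1-p) else 0)) / DD \<beta> p z) else 0)
       + (if 0 < i then of_real (-q) * ((dd \<beta> z * of_real (if j = i then -(1-p) else 0) + of_real p * of_real (if j+1 = i then -(1-p) else 0)) / DD \<beta> p z) else 0))"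
    unfolding schur_formula[OF D i j] T1 T2 v7[OF i j] ..
  have M1: "1 \<le> M" by simp
  have LM: "(3::nat)^(l-1) = M" ..
  have ne1: "(i = i + 1) = False" "(i + 1 = i) = False" by simp_all
  consider (d) "j = i" | (u) "j = i+1" | (lo) "j+1 = i" | (o) "j \<noteq> i" "j \<noteq> i+1" "j+1 \<noteq> i" by blast
  then show ?thesis
  proof cases
    case d
    define Y where "Y = (dd \<beta> z * of_real (-(1-p)) + of_real p * of_real 0) / DD \<beta> p z"
    have Y: "Y = - ((1 - of_real p) * dd \<beta> z / DD \<beta> p z)"
      unfolding Y_def by (simp add: minus_divide_left algebra_simps)
    have A': "schur l p \<beta> (real k/3) 0 z (3*i) (3*j) = of_real \<beta> - z - ((if i < M then of_real (-r) * Y else 0) + (if 0 < i then of_real (-q) * Y else 0))"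
      unfolding Y_def A unfolding d by (simp only: ne1 if_True if_False simp_thms)
    have "schur l p \<beta> (real k/3) 0 z (3*i) (3*j) = of_real \<beta> - z + Y"
    proof (cases "i = 0")
      case True
      then show ?thesis unfolding A' using M1 r_def by simp
    next
      case F0: False
      show ?thesis
      proof (cases "i = M")
        case True
        then show ?thesis unfolding A' using F0 q_def by simp
      next
        case False
        have rq: "r + q = 1" unfolding r_def q_def using F0 False trans_p_sum[of i p] by simp
        have "complex_of_real (-r) * Y + complex_of_real (-q) * Y = - (of_real (r + q) * Y)" by (simp add: algebra_simps)
        then show ?thesis unfolding A' using F0 False i rq by simp
      qed
    qed
    also have "\<dots> = of_real \<beta> - z - (1 - of_real p) * dd \<beta> z / DD \<beta> p z" unfolding Y by simp
    also have "\<dots> = (4 * p * (p - 1) / (4 * p\<^sup>2 - (\<beta> + 2 * z)\<^sup>2))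
     - (- (\<beta>\<^sup>2 + 2 * \<beta> * p + \<beta> * z - 2 * p * z - 2 * p - 2 * z\<^sup>2 + 2) / (\<beta> + 2 * p + 2 * z))"
      unfolding K1[OF D] ..
    finally show ?thesis using d by (simp add: lap_def)
  next
    case u
    then have iM: "i < M" using j by simp
    have "schur l p \<beta> (real k/3) 0 z (3*i) (3*j) = - (complex_of_real (-r) * (of_real p * of_real (-(1-p)) / DD \<beta> p z))"
      unfolding A using u iM by simp
    also have "\<dots> = - of_real r * (of_real p * (1 - of_real p) / DD \<beta> p z)" by (rule neg_helper)
    finally have S: "schur l p \<beta> (real k/3) 0 z (3*i) (3*j) = - of_real r * (of_real p * (1 - of_real p) / DD \<beta> p z)" .
    have "lap (l-1) p i j = - r" using u iM unfolding lap_def r_def by auto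
    then show ?thesis using u S unfolding K2[OF D] by simp
  next
    case lo
    then have i0: "0 < i" by simp
    have "schur l p \<beta> (real k/3) 0 z (3*i) (3*j) = - (complex_of_real (-q) * (of_real p * of_real (-(1-p)) / DD \<beta> p z))"
      unfolding A using lo i0 by simp
    also have "\<dots> = - of_real q * (of_real p * (1 - of_real p) / DD \<beta> p z)" by (rule neg_helper)
    finally have S: "schur l p \<beta> (real k/3) 0 z (3*i) (3*j) = - of_real q * (of_real p * (1 - of_real p) / DD \<beta> p z)" .
    have "lap (l-1) p i j = - q" using lo i0 unfolding lap_def q_def by auto
    then show ?thesis using lo S unfolding K2[OF D] by simp
  next
    case o
    have "schur l p \<beta> (real k/3) 0 z (3*i) (3*j) = 0"
      unfolding A using o by simp
    moreover have "lap (l-1) p i j = 0" using o trans_p_zero[of j i p] unfolding lap_def by auto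
    ultimately show ?thesis using o by simp
  qed
qed

lemma phi0: fixes z :: complex
  shows "(4 * p * (p - 1) / (4 * p\<^sup>2 - (\<beta> + 2 * z)\<^sup>2) = 0) \<longleftrightarrow> DD \<beta> p z = 0"
  unfolding DD_fact using p0 p1 by simp

lemma exc_eq: "exceptional_set l p \<beta> (real k / 3) 0 (\<lambda>z. 4 * p * (p - 1) / (4 * p\<^sup>2 - (\<beta> + 2 * z)\<^sup>2))
   = {z. DD \<beta> p z = 0}"
  unfolding exceptional_set_def phi0 using spec_DD[OF p0 p1 l1 kk] by blast

lemma DD0: "DD \<beta> p z = 0 \<longleftrightarrow> z \<in> {complex_of_real (- \<beta> / 2 - p), complex_of_real (- \<beta> / 2 + p)}"
proof -
  have "DD \<beta> p z = 0 \<longleftrightarrow> dd \<beta> z = of_real p \<or> dd \<beta> z = - of_real p"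
    unfolding DD_fact2 by (simp add: eq_neg_iff_add_eq_0)
  also have "dd \<beta> z = of_real p \<longleftrightarrow> z = complex_of_real (- \<beta> / 2 - p)"
    unfolding dd_def by (auto simp: algebra_simps)
  also have "dd \<beta> z = - of_real p \<longleftrightarrow> z = complex_of_real (- \<beta> / 2 + p)"
    unfolding dd_def by (auto simp: algebra_simps)
  finally show ?thesis by simp
qed

lemma K3_alg: fixes N x P :: complex assumes "x - P \<noteq> 0" "x + P \<noteq> 0" "P \<noteq> 0" "1 - P \<noteq> 0"
  shows "(- N / (-2 * (x - P))) / (P * (1 - P) / ((x - P) * (x + P))) = 2 * (x + P) * N / (4 * P * (1 - P))"
proof -
  have m: "- N / (-2 * (x - P)) = N / (2 * (x - P))" by (simp only: mult_minus_left minus_divide_divide)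
  have "(N / (2 * (x - P))) / (P * (1 - P) / ((x - P) * (x + P))) = (N * ((x - P) * (x + P))) / ((2 * (x - P)) * (P * (1 - P)))"
    by (rule divide_divide_times_eq)
  also have "\<dots> = ((x - P) * (N * (x + P))) / ((x - P) * (2 * P * (1 - P)))"
    by (simp add: algebra_simps)
  also have "\<dots> = (N * (x + P)) / (2 * P * (1 - P))"
    using assms(1) by (rule mult_divide_mult_cancel_left)
  also have "\<dots> = (2 * (N * (x + P))) / (2 * (2 * P * (1 - P)))"
    by (rule mult_divide_mult_cancel_left[symmetric]) simp
  also have "\<dots> = 2 * (x + P) * N / (4 * P * (1 - P))"
    by (simp add: algebra_simps)
  finally show ?thesis unfolding m .
qed

lemma K3: fixes z :: complex assumes D: "DD \<beta> p z \<noteq> 0"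
  shows "(- (\<beta>\<^sup>2 + 2 * \<beta> * p + \<beta> * z - 2 * p * z - 2 * p - 2 * z\<^sup>2 + 2) / (\<beta> + 2 * p + 2 * z))
              / (4 * p * (p - 1) / (4 * p\<^sup>2 - (\<beta> + 2 * z)\<^sup>2))
            = (- \<beta> + 2 * p - 2 * z) * (\<beta>\<^sup>2 + 2 * \<beta> * p + \<beta> * z - 2 * p * z - 2 * p - 2 * z\<^sup>2 + 2)
                / (4 * p * (1 - p))"
proof -
  have n1: "dd \<beta> z - of_real p \<noteq> 0" "dd \<beta> z + of_real p \<noteq> 0" using D DD_fact2 by auto
  have e1: "(\<beta> + 2 * p + 2 * z) = -2 * (dd \<beta> z - of_real p)"
    by (simp add: dd_def field_simps)
  have e2: "(- \<beta> + 2 * p - 2 * z) = 2 * (dd \<beta> z + of_real p)"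
    by (simp add: dd_def field_simps)
  have e3: "(4 * p * (1 - p) :: complex) = 4 * of_real p * (1 - of_real p)" by simp
  have np: "complex_of_real p \<noteq> 0" "1 - complex_of_real p \<noteq> 0" using p0 p1 by auto
  show ?thesis unfolding e1 e2 e3 K2[OF D] DD_fact2 by (rule K3_alg[OF n1 np])
qed

end


theorem lemma3p7:
  fixes p \<beta> :: real and l k :: nat
  assumes "0 < p" and "p < 1" and "1 \<le> l" and "k \<in> {1, 2}"
  shows "spectrally_similar l p \<beta> (real k / 3) 0
           (\<lambda>z. 4 * p * (p - 1) / (4 * p\<^sup>2 - (\<beta> + 2 * z)\<^sup>2))
           (\<lambda>z. - (\<beta>\<^sup>2 + 2 * \<beta> * p + \<beta> * z - 2 * p * z - 2 * p - 2 * z\<^sup>2 + 2) / (\<beta> + 2 * p + 2 * z))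
       \<and> (\<forall>z::complex. z \<notin> exceptional_set l p \<beta> (real k / 3) 0
                    (\<lambda>z. 4 * p * (p - 1) / (4 * p\<^sup>2 - (\<beta> + 2 * z)\<^sup>2)) \<longrightarrow>
            (- (\<beta>\<^sup>2 + 2 * \<beta> * p + \<beta> * z - 2 * p * z - 2 * p - 2 * z\<^sup>2 + 2) / (\<beta> + 2 * p + 2 * z))
              / (4 * p * (p - 1) / (4 * p\<^sup>2 - (\<beta> + 2 * z)\<^sup>2))
            = (- \<beta> + 2 * p - 2 * z) * (\<beta>\<^sup>2 + 2 * \<beta> * p + \<beta> * z - 2 * p * z - 2 * p - 2 * z\<^sup>2 + 2)
                / (4 * p * (1 - p)))
       \<and> exceptional_set l p \<beta> (real k / 3) 0
           (\<lambda>z. 4 * p * (p - 1) / (4 * p\<^sup>2 - (\<beta> + 2 * z)\<^sup>2))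
         = {complex_of_real (- \<beta> / 2 - p), complex_of_real (- \<beta> / 2 + p)}"
proof -
  note E = exc_eq[OF assms]
  have Dnz: "DD \<beta> p z \<noteq> 0" if "z \<notin> exceptional_set l p \<beta> (real k / 3) 0
                    (\<lambda>z. 4 * p * (p - 1) / (4 * p\<^sup>2 - (\<beta> + 2 * z)\<^sup>2))" for z
    using that E by auto
  have P1: "spectrally_similar l p \<beta> (real k / 3) 0
           (\<lambda>z. 4 * p * (p - 1) / (4 * p\<^sup>2 - (\<beta> + 2 * z)\<^sup>2))
           (\<lambda>z. - (\<beta>\<^sup>2 + 2 * \<beta> * p + \<beta> * z - 2 * p * z - 2 * p - 2 * z\<^sup>2 + 2) / (\<beta> + 2 * p + 2 * z))"
    unfolding spectrally_similar_def
  proof (intro allI impI ballI)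
    fix z u w
    assume z: "z \<notin> exceptional_set l p \<beta> (real k / 3) 0
                    (\<lambda>z. 4 * p * (p - 1) / (4 * p\<^sup>2 - (\<beta> + 2 * z)\<^sup>2))"
      and u: "u \<in> V (l - 1)" and w: "w \<in> V (l - 1)"
    have D: "DD \<beta> p z \<noteq> 0" by (rule Dnz[OF z])
    have u': "u \<le> 3^(l-1)" and w': "w \<le> 3^(l-1)" using u w unfolding V_def by auto
    show "schur l p \<beta> (real k / 3) 0 z (3 * u) (3 * w)
        = 4 * p * (p - 1) / (4 * p\<^sup>2 - (\<beta> + 2 * z)\<^sup>2) * complex_of_real (lap (l - 1) p u w)
          - (if u = w then - (\<beta>\<^sup>2 + 2 * \<beta> * p + \<beta> * z - 2 * p * z - 2 * p - 2 * z\<^sup>2 + 2) / (\<beta> + 2 * p + 2 * z) else 0)"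
      using entry[OF assms D u' w'] by simp
  qed
  have P2: "\<forall>z::complex. z \<notin> exceptional_set l p \<beta> (real k / 3) 0
                    (\<lambda>z. 4 * p * (p - 1) / (4 * p\<^sup>2 - (\<beta> + 2 * z)\<^sup>2)) \<longrightarrow>
            (- (\<beta>\<^sup>2 + 2 * \<beta> * p + \<beta> * z - 2 * p * z - 2 * p - 2 * z\<^sup>2 + 2) / (\<beta> + 2 * p + 2 * z))
              / (4 * p * (p - 1) / (4 * p\<^sup>2 - (\<beta> + 2 * z)\<^sup>2))
            = (- \<beta> + 2 * p - 2 * z) * (\<beta>\<^sup>2 + 2 * \<beta> * p + \<beta> * z - 2 * p * z - 2 * p - 2 * z\<^sup>2 + 2)
                / (4 * p * (1 - p))"
    using K3[OF assms] Dnz by blast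
  have P3: "exceptional_set l p \<beta> (real k / 3) 0
           (\<lambda>z. 4 * p * (p - 1) / (4 * p\<^sup>2 - (\<beta> + 2 * z)\<^sup>2))
         = {complex_of_real (- \<beta> / 2 - p), complex_of_real (- \<beta> / 2 + p)}"
    unfolding E using DD0[OF assms] by blast
  show ?thesis using P1 P2 P3 by blast
qed

end
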